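(* Let $A \in L(H)$ and $\rho > 0$ with $\sigma(A) \cap S_\rho = \emptyset$, let $M_\rho \coloneqq \sup_{z \in S_\rho} |(z-A)^{-1}|_{L(H)}$, and let $F \colon \ell_{2,\rho}(\mathbb{Z}; H) \to \ell_{2,\rho}(\mathbb{Z}; H)$ have Lipschitz constant $|F|_{\operatorname{Lip}(\ell_{2,\rho}(\mathbb{Z}; H))} < 1/M_\rho$. Then the Lyapunov--Perron operator $$\mathcal{L}_\rho \colon H \times \ell_{2,\rho}(\mathbb{Z}; H) \to \ell_{2,\rho}(\mathbb{Z}; H),\qquad (x,u) \mapsto \chi_{\mathbb{Z}_{\geq 0}} (\tau - A)^{-1}(F(u) + \delta_{-1} x),$$ is well-defined, and for every $x \in H$ the map $\mathcal{L}_\rho(x, \cdot)$ is a contraction on $\ell_{2,\rho}(\mathbb{Z}; H)$.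
   Context: $H$ is a separable complex Hilbert space, $\sigma(A)$ the spectrum of $A$, $S_\rho=\{|z|=\rho\}$. $\ell_{2,\rho}(\mathbb{Z}; H) = \{u \in H^{\mathbb{Z}} : \sum_{k} |u_k|_H^2 \rho^{-2k} < \infty\}$. $\tau$ is the shift $(\tau u)_n = u_{n+1}$, $A$ acts componentwise $(Au)_n = Au_n$, $(\tau-A)^{-1}$ is the inverse of $\tau-A$ on $\ell_{2,\rho}(\mathbb{Z};H)$, $\delta_{-1}x$ is the sequence with entry $x$ at index $-1$ and $0$ elsewhere, and $\chi_{\mathbb{Z}_{\geq 0}}$ denotes multiplication by the indicator of $\mathbb{Z}_{\geq 0}$, i.e. $(\chi_{\mathbb{Z}_{\geq0}}v)_n = v_n$ for $n\ge0$ and $0$ for $n<0$. *)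

theory Defs
  imports "HOL-Analysis.Analysis"
begin

text \<open>A complex Hilbert space is modelled as a real Hilbert space (real inner product,
complete) together with a complex structure J: an orthogonal real-linear map with J (J x) = - x.\<close>

definition complex_structure :: "('h::real_inner \<Rightarrow> 'h) \<Rightarrow> bool" where
  "complex_structure J \<longleftrightarrow> bounded_linear J \<and> (\<forall>x. J (J x) = - x)
      \<and> (\<forall>x y. inner (J x) (J y) = inner x y)"

definition cscale :: "('h::real_vector \<Rightarrow> 'h) \<Rightarrow> complex \<Rightarrow> 'h \<Rightarrow> 'h" where
  "cscale J z x = Re z *\<^sub>R x + Im z *\<^sub>R J x"

definition bounded_clinear_op :: "('h::real_normed_vector \<Rightarrow> 'h) \<Rightarrow> ('h \<Rightarrow> 'h) \<Rightarrow> bool" where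
  "bounded_clinear_op J A \<longleftrightarrow> bounded_linear A \<and> (\<forall>x. A (J x) = J (A x))"

definition shifted_op :: "('h::real_vector \<Rightarrow> 'h) \<Rightarrow> ('h \<Rightarrow> 'h) \<Rightarrow> complex \<Rightarrow> 'h \<Rightarrow> 'h" where
  "shifted_op J A z = (\<lambda>x. cscale J z x - A x)"

definition spectrum :: "('h::real_normed_vector \<Rightarrow> 'h) \<Rightarrow> ('h \<Rightarrow> 'h) \<Rightarrow> complex set" where
  "spectrum J A = {z. \<not> (\<exists>B. bounded_clinear_op J B \<and> B \<circ> shifted_op J A z = id
                                   \<and> shifted_op J A z \<circ> B = id)}"

text \<open>Resolvent (z - A)^{-1} (meaningful for z outside the spectrum).\<close>
definition resolvent :: "('h::real_vector \<Rightarrow> 'h) \<Rightarrow> ('h \<Rightarrow> 'h) \<Rightarrow> complex \<Rightarrow> 'h \<Rightarrow> 'h" where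
  "resolvent J A z = inv (shifted_op J A z)"

definition l2rho :: "real \<Rightarrow> (int \<Rightarrow> 'h::real_normed_vector) set" where
  "l2rho \<rho> = {u. (\<lambda>k. (norm (u k))\<^sup>2 * \<rho> powi (-2 * k)) summable_on UNIV}"

definition l2rho_norm :: "real \<Rightarrow> (int \<Rightarrow> 'h::real_normed_vector) \<Rightarrow> real" where
  "l2rho_norm \<rho> u = sqrt (\<Sum>\<^sub>\<infinity>k. (norm (u k))\<^sup>2 * \<rho> powi (-2 * k))"

definition shift :: "(int \<Rightarrow> 'h) \<Rightarrow> int \<Rightarrow> 'h" where
  "shift u = (\<lambda>n. u (n + 1))"

definition tau_minus_A :: "('h::ab_group_add \<Rightarrow> 'h) \<Rightarrow> (int \<Rightarrow> 'h) \<Rightarrow> int \<Rightarrow> 'h" where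
  "tau_minus_A A u = (\<lambda>n. u (n + 1) - A (u n))"

definition delta_m1 :: "'h::zero \<Rightarrow> int \<Rightarrow> 'h" where
  "delta_m1 x = (\<lambda>n. if n = -1 then x else 0)"

definition chi_nonneg :: "(int \<Rightarrow> 'h::zero) \<Rightarrow> int \<Rightarrow> 'h" where
  "chi_nonneg v = (\<lambda>n. if n \<ge> 0 then v n else 0)"

end

theory Submission
  imports Defs "HOL-Analysis.Analysis"
begin

lemma cs_J_props:
  assumes "complex_structure J"
  shows "bounded_linear J" "\<And>x. J (J x) = - x" "\<And>x y. inner (J x) (J y) = inner x y"
  using assms unfolding complex_structure_def by auto

lemma cs_inner_J_left:
  assumes "complex_structure J"
  shows "inner (J x) y = - inner x (J y)"
proof -
  have "inner (J x) y = inner (J (J x)) (J y)" using cs_J_props(3)[OF assms] by simp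
  also have "\<dots> = - inner x (J y)" using cs_J_props(2)[OF assms] by simp
  finally show ?thesis .
qed

lemma cs_inner_self_J:
  assumes "complex_structure J"
  shows "inner x (J x) = 0"
  using cs_inner_J_left[OF assms, of x x] by (simp add: inner_commute)

lemma cscale_bl:
  assumes "complex_structure J"
  shows "bounded_linear (cscale J z)"
proof -
  interpret J: bounded_linear J using cs_J_props(1)[OF assms] .
  have "bounded_linear (\<lambda>x. Re z *\<^sub>R x + Im z *\<^sub>R J x)"
    by (intro bounded_linear_add bounded_linear_scaleR_right
        bounded_linear_compose[OF bounded_linear_scaleR_right J.bounded_linear_axioms])
  then show ?thesis unfolding cscale_def[abs_def] .
qed

lemma cscale_add_left: "cscale J (z + w) x = cscale J z x + cscale J w x"
  by (simp add: cscale_def algebra_simps scaleR_add_left)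

lemma cscale_sum_left: "cscale J (\<Sum>i\<in>S. f i) x = (\<Sum>i\<in>S. cscale J (f i) x)"
proof -
  have z: "cscale J 0 x = 0" by (simp add: cscale_def)
  show ?thesis by (induction S rule: infinite_finite_induct) (simp_all add: cscale_add_left z)
qed

lemma cscale_of_real: "cscale J (of_real r) x = r *\<^sub>R x"
  by (simp add: cscale_def)

lemma cscale_mult:
  assumes "complex_structure J"
  shows "cscale J (z * w) x = cscale J z (cscale J w x)"
proof -
  interpret J: bounded_linear J using cs_J_props(1)[OF assms] .
  show ?thesis using cs_J_props(2)[OF assms]
    by (simp add: cscale_def J.add J.scaleR algebra_simps)
qed

lemma cscale_sum_right:
  assumes "complex_structure J"
  shows "cscale J z (\<Sum>i\<in>S. f i) = (\<Sum>i\<in>S. cscale J z (f i))"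
  using linear_sum[OF bounded_linear.linear[OF cscale_bl[OF assms]]] by simp

lemma cscale_scaleR_right:
  assumes "complex_structure J"
  shows "cscale J z (r *\<^sub>R x) = r *\<^sub>R cscale J z x"
proof -
  interpret J: bounded_linear J using cs_J_props(1)[OF assms] .
  show ?thesis by (simp add: cscale_def J.scaleR algebra_simps)
qed

lemma cscale_inner:
  assumes "complex_structure J"
  shows "inner (cscale J z x) (cscale J w y)
     = Re (z * cnj w) * inner x y - Im (z * cnj w) * inner x (J y)"
  using cs_J_props(3)[OF assms] cs_inner_J_left[OF assms, of x y]
  by (simp add: cscale_def inner_add_left inner_add_right algebra_simps)

lemma cscale_norm:
  assumes "complex_structure J"
  shows "norm (cscale J z x) = cmod z * norm x"
proof -
  have "(norm (cscale J z x))\<^sup>2 = Re (z * cnj z) * (norm x)\<^sup>2"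
    using cscale_inner[OF assms, of z x z x] cs_inner_self_J[OF assms, of x]
    by (simp add: power2_norm_eq_inner)
  also have "Re (z * cnj z) = (cmod z)\<^sup>2" by (simp add: complex_mult_cnj cmod_def)
  finally have "(norm (cscale J z x))\<^sup>2 = (cmod z * norm x)\<^sup>2" by (simp add: power_mult_distrib)
  then show ?thesis by (simp add: power2_eq_iff_nonneg)
qed

lemma clinear_cscale:
  assumes "complex_structure J" "bounded_clinear_op J B"
  shows "B (cscale J z x) = cscale J z (B x)"
proof -
  interpret B: bounded_linear B using assms(2) unfolding bounded_clinear_op_def by auto
  show ?thesis using assms(2) unfolding bounded_clinear_op_def
    by (simp add: cscale_def B.add B.scaleR)
qed

definition ee :: "nat \<Rightarrow> int \<Rightarrow> complex" where
  "ee N t = cis (2 * pi * of_int t / real N)"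

lemma ee_add: "ee N (s + t) = ee N s * ee N t"
  by (simp add: ee_def cis_mult add_divide_distrib distrib_left)

lemma ee_cnj: "cnj (ee N t) = ee N (- t)"
  by (simp add: ee_def cis_cnj)

lemma ee_norm [simp]: "cmod (ee N t) = 1"
  by (simp add: ee_def)

lemma ee_dvd:
  assumes "N > 0" "int N dvd t"
  shows "ee N t = 1"
proof -
  obtain k where k: "t = int N * k" using assms(2) by blast
  have "2 * pi * of_int t / real N = 2 * pi * of_int k" using assms(1) by (simp add: k field_simps)
  then show ?thesis unfolding ee_def by (simp add: cis_multiple_2pi)
qed

lemma ee_not1:
  assumes "N > 0" "\<not> int N dvd t"
  shows "ee N t \<noteq> 1"
proof
  assume "ee N t = 1"
  then have "cos (2 * pi * of_int t / real N) = 1"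
    unfolding ee_def by (metis Re_complex_of_real complex_of_real_def cis.sel(1) one_complex.sel(1))
  then obtain n :: int where n: "2 * pi * of_int t / real N = of_int n * 2 * pi"
    by (auto simp: cos_one_2pi_int)
  then have "real_of_int t = real_of_int (int N * n)" using assms(1) by (simp add: field_simps)
  then have "t = int N * n" by linarith
  then show False using assms(2) by simp
qed

lemma ee_pow: "ee N t ^ i = ee N (int i * t)"
  unfolding ee_def Complex.DeMoivre by (simp add: field_simps)

lemma ee_orth:
  assumes "N > 0"
  shows "(\<Sum>q\<in>{a..<a+int N}. ee N (q * m)) = (if int N dvd m then of_nat N else 0)"
proof -
  have img: "{a..<a+int N} = (\<lambda>i. a + int i) ` {..<N}"
  proof (rule set_eqI, rule iffI)
    fix q assume "q \<in> {a..<a+int N}"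
    then show "q \<in> (\<lambda>i. a + int i) ` {..<N}"
      by (intro image_eqI[of _ _ "nat (q - a)"]) auto
  qed auto
  have "(\<Sum>q\<in>{a..<a+int N}. ee N (q * m)) = (\<Sum>i<N. ee N ((a + int i) * m))"
    unfolding img by (subst sum.reindex) (auto simp: inj_on_def)
  also have "\<dots> = ee N (a * m) * (\<Sum>i<N. ee N m ^ i)"
    by (simp add: sum_distrib_left ee_pow ee_add[symmetric] algebra_simps)
  also have "\<dots> = (if int N dvd m then of_nat N else 0)"
  proof (cases "int N dvd m")
    case True
    then have "ee N m = 1" "ee N (a * m) = 1" using assms by (auto intro!: ee_dvd)
    then show ?thesis using True by simp
  next
    case False
    then have ne: "ee N m \<noteq> 1" using assms ee_not1 by blast
    have "ee N m ^ N = 1" using assms by (simp add: ee_pow ee_dvd)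
    then have "(\<Sum>i<N. ee N m ^ i) = 0" using ne by (simp add: geometric_sum)
    then show ?thesis using False by simp
  qed
  finally show ?thesis .
qed

lemma parseval:
  fixes v :: "int \<Rightarrow> 'h::real_inner"
  assumes J: "complex_structure J" and N: "N > 0" and P: "finite P"
    and inc: "\<And>p p'. p \<in> P \<Longrightarrow> p' \<in> P \<Longrightarrow> int N dvd (p - p') \<Longrightarrow> p = p'"
    and s: "s = 1 \<or> s = -1"
  shows "(\<Sum>q\<in>{a..<a+int N}. (norm (\<Sum>p\<in>P. cscale J (ee N (s * (q * p))) (v p)))\<^sup>2)
          = real N * (\<Sum>p\<in>P. (norm (v p))\<^sup>2)"
proof -
  define Q where "Q = {a..<a+int N}"
  have dv: "int N dvd (s * (p - p')) \<longleftrightarrow> p = p'" if "p \<in> P" "p' \<in> P" for p p'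
    using inc[OF that] s by (auto simp: dvd_diff_commute)
  have cc: "ee N (s * (q * p)) * cnj (ee N (s * (q * p'))) = ee N (q * (s * (p - p')))" for q p p'
    by (simp add: ee_cnj ee_add[symmetric] algebra_simps)
  have "(\<Sum>q\<in>Q. (norm (\<Sum>p\<in>P. cscale J (ee N (s * (q * p))) (v p)))\<^sup>2)
      = (\<Sum>q\<in>Q. \<Sum>p\<in>P. \<Sum>p'\<in>P. Re (ee N (q * (s * (p - p')))) * inner (v p) (v p')
                 - Im (ee N (q * (s * (p - p')))) * inner (v p) (J (v p')))"
    apply (simp add: power2_norm_eq_inner inner_sum_left inner_sum_right cscale_inner[OF J] cc)
    apply (rule sum.cong[OF refl])
    apply (rule sum.swap)
    done
  also have "\<dots> = (\<Sum>p\<in>P. \<Sum>p'\<in>P. \<Sum>q\<in>Q. Re (ee N (q * (s * (p - p')))) * inner (v p) (v p')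
                 - Im (ee N (q * (s * (p - p')))) * inner (v p) (J (v p')))"
    by (subst sum.swap, rule sum.cong, rule refl, subst sum.swap, rule refl)
  also have "\<dots> = (\<Sum>p\<in>P. \<Sum>p'\<in>P. Re (\<Sum>q\<in>Q. ee N (q * (s * (p - p')))) * inner (v p) (v p')
                 - Im (\<Sum>q\<in>Q. ee N (q * (s * (p - p')))) * inner (v p) (J (v p')))"
    by (simp add: sum_subtractf Re_sum Im_sum sum_distrib_right)
  also have "\<dots> = (\<Sum>p\<in>P. \<Sum>p'\<in>P. if p' = p then real N * inner (v p) (v p) else 0)"
    unfolding Q_def
    by (intro sum.cong refl) (auto simp: ee_orth[OF N] dv)
  also have "\<dots> = real N * (\<Sum>p\<in>P. (norm (v p))\<^sup>2)"
    using P by (simp add: sum_distrib_left power2_norm_eq_inner)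
  finally show ?thesis unfolding Q_def .
qed

definition ell :: "(int \<Rightarrow> 'h::real_normed_vector) \<Rightarrow> bool" where
  "ell v \<longleftrightarrow> (\<lambda>k. (norm (v k))\<^sup>2) summable_on UNIV"

definition nrm :: "(int \<Rightarrow> 'h::real_normed_vector) \<Rightarrow> real" where
  "nrm v = sqrt (\<Sum>\<^sub>\<infinity>k. (norm (v k))\<^sup>2)"

lemma nrm_nonneg: "nrm v \<ge> 0"
  unfolding nrm_def by (simp add: infsum_nonneg)

lemma L2_le_nrm:
  assumes "ell v" "finite F"
  shows "L2_set (\<lambda>k. norm (v k)) F \<le> nrm v"
proof -
  have "(\<Sum>k\<in>F. (norm (v k))\<^sup>2) \<le> (\<Sum>\<^sub>\<infinity>k. (norm (v k))\<^sup>2)"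
    using assms by (intro finite_sum_le_infsum) (auto simp: ell_def)
  then show ?thesis unfolding L2_set_def nrm_def by simp
qed

lemma nrm_le:
  assumes "\<And>F. finite F \<Longrightarrow> L2_set (\<lambda>k. norm (v k)) F \<le> C"
  shows "ell v \<and> nrm v \<le> C"
proof -
  have C: "C \<ge> 0" using assms[of "{}"] by simp
  have fs: "(\<Sum>k\<in>F. (norm (v k))\<^sup>2) \<le> C\<^sup>2" if "finite F" for F
  proof -
    have "sqrt (\<Sum>k\<in>F. (norm (v k))\<^sup>2) \<le> C" using assms[OF that] unfolding L2_set_def .
    moreover have "0 \<le> (\<Sum>k\<in>F. (norm (v k))\<^sup>2)" by (simp add: sum_nonneg)
    ultimately show ?thesis
      by (metis real_sqrt_ge_zero real_sqrt_pow2 power_mono)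
  qed
  have sm: "(\<lambda>k. (norm (v k))\<^sup>2) summable_on UNIV"
    by (rule nonneg_bdd_above_summable_on) (auto intro!: bdd_aboveI[of _ "C\<^sup>2"] fs)
  have "(\<Sum>\<^sub>\<infinity>k. (norm (v k))\<^sup>2) \<le> C\<^sup>2"
    by (rule infsum_le_finite_sums[OF sm]) (use fs in auto)
  then have "nrm v \<le> sqrt (C\<^sup>2)" unfolding nrm_def by (simp only: real_sqrt_le_iff)
  then show ?thesis using sm C by (simp add: ell_def)
qed

lemma ell_fin:
  assumes "finite S" "\<And>k. k \<notin> S \<Longrightarrow> v k = 0"
  shows "ell v" "nrm v = L2_set (\<lambda>k. norm (v k)) S"
proof -
  have "(\<lambda>k. (norm (v k))\<^sup>2) summable_on UNIV \<longleftrightarrow> (\<lambda>k. (norm (v k))\<^sup>2) summable_on S"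
    by (rule summable_on_cong_neutral) (use assms in auto)
  then show "ell v" using assms(1) by (simp add: ell_def)
  have "(\<Sum>\<^sub>\<infinity>k. (norm (v k))\<^sup>2) = (\<Sum>\<^sub>\<infinity>k\<in>S. (norm (v k))\<^sup>2)"
    by (rule infsum_cong_neutral) (use assms in auto)
  then show "nrm v = L2_set (\<lambda>k. norm (v k)) S" using assms(1)
    by (simp add: nrm_def L2_set_def)
qed

lemma nrm_pt:
  assumes "ell v" shows "norm (v k) \<le> nrm v"
  using L2_le_nrm[OF assms, of "{k}"] by simp

lemma ell_add:
  assumes "ell v" "ell w"
  shows "ell (\<lambda>k. v k + w k) \<and> nrm (\<lambda>k. v k + w k) \<le> nrm v + nrm w"
proof (rule nrm_le)
  fix F :: "int set" assume F: "finite F"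
  have "L2_set (\<lambda>k. norm (v k + w k)) F \<le> L2_set (\<lambda>k. norm (v k) + norm (w k)) F"
    by (rule L2_set_mono) (auto simp: norm_triangle_ineq)
  also have "\<dots> \<le> L2_set (\<lambda>k. norm (v k)) F + L2_set (\<lambda>k. norm (w k)) F"
    by (rule L2_set_triangle_ineq)
  also have "\<dots> \<le> nrm v + nrm w" using L2_le_nrm[OF assms(1) F] L2_le_nrm[OF assms(2) F] by simp
  finally show "L2_set (\<lambda>k. norm (v k + w k)) F \<le> nrm v + nrm w" .
qed

lemma ell_uminus: "ell (\<lambda>k. - v k) = ell v" "nrm (\<lambda>k. - v k) = nrm v"
  by (simp_all add: ell_def nrm_def)

lemma ell_diff:
  assumes "ell v" "ell w"
  shows "ell (\<lambda>k. v k - w k) \<and> nrm (\<lambda>k. v k - w k) \<le> nrm v + nrm w"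
  using ell_add[OF assms(1), of "\<lambda>k. - w k"] assms(2) by (simp add: ell_uminus)

lemma nrm_diff_commute: "nrm (\<lambda>k. v k - w k) = nrm (\<lambda>k. w k - v k)"
  unfolding nrm_def by (simp add: norm_minus_commute)

lemma ell_fatou:
  assumes "\<And>n. ell (V n)" "\<And>k. (\<lambda>n. V n k) \<longlonglongrightarrow> v k" "\<And>n. n \<ge> n0 \<Longrightarrow> nrm (V n) \<le> C"
  shows "ell v \<and> nrm v \<le> C"
proof (rule nrm_le)
  fix F :: "int set" assume F: "finite F"
  have "(\<lambda>n. L2_set (\<lambda>k. norm (V n k)) F) \<longlonglongrightarrow> L2_set (\<lambda>k. norm (v k)) F"
    unfolding L2_set_def by (intro tendsto_intros assms(2))
  moreover have "\<forall>n\<ge>n0. L2_set (\<lambda>k. norm (V n k)) F \<le> C"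
    using L2_le_nrm[OF assms(1) F] assms(3) order_trans by blast
  ultimately show "L2_set (\<lambda>k. norm (v k)) F \<le> C" by (intro LIMSEQ_le_const2) auto
qed

lemma finite_int_bound:
  fixes S :: "int set" assumes "finite S"
  shows "\<exists>B::nat. \<forall>k\<in>S. \<bar>k\<bar> \<le> int B"
proof -
  have "\<bar>k\<bar> \<le> (\<Sum>j\<in>S. \<bar>j\<bar>)" if "k \<in> S" for k
    using assms that by (intro member_le_sum) auto
  then show ?thesis by (intro exI[of _ "nat (\<Sum>j\<in>S. \<bar>j\<bar>)"]) force
qed

lemma ell_tail:
  assumes "ell v"
  shows "(\<lambda>K::nat. (norm (v (int K)))\<^sup>2 + (norm (v (- int K)))\<^sup>2) \<longlonglongrightarrow> 0"
proof (rule LIMSEQ_I)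
  fix e :: real assume e: "e > 0"
  define S where "S = {k. e / 2 \<le> (norm (v k))\<^sup>2}"
  have "finite S"
  proof (rule ccontr)
    assume "infinite S"
    obtain n :: nat where n: "real n * (e / 2) > (nrm v)\<^sup>2"
      using reals_Archimedean3[OF half_gt_zero[OF e]] by blast
    obtain B where B: "finite B" "card B = n" "B \<subseteq> S"
      using infinite_arbitrarily_large[OF \<open>infinite S\<close>] by blast
    have "real n * (e / 2) = (\<Sum>k\<in>B. e / 2)" using B by simp
    also have "\<dots> \<le> (\<Sum>k\<in>B. (norm (v k))\<^sup>2)" using B by (intro sum_mono) (auto simp: S_def)
    also have "\<dots> = (L2_set (\<lambda>k. norm (v k)) B)\<^sup>2" unfolding L2_set_def by (simp add: sum_nonneg)
    also have "\<dots> \<le> (nrm v)\<^sup>2" using L2_le_nrm[OF assms B(1)] by (simp add: power_mono)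
    finally show False using n by simp
  qed
  then obtain B where B: "\<And>k. k \<in> S \<Longrightarrow> \<bar>k\<bar> \<le> int B" using finite_int_bound by blast
  show "\<exists>no. \<forall>n\<ge>no. norm ((norm (v (int n)))\<^sup>2 + (norm (v (- int n)))\<^sup>2 - 0) < e"
  proof (intro exI allI impI)
    fix n assume "n \<ge> Suc B"
    then have "int n \<notin> S" "- int n \<notin> S" using B by force+
    then show "norm ((norm (v (int n)))\<^sup>2 + (norm (v (- int n)))\<^sup>2 - 0) < e"
      by (auto simp: S_def)
  qed
qed

lemma ell_trunc:
  assumes "ell v" "e > 0"
  obtains K :: nat where "nrm (\<lambda>k. v k - (if - int K \<le> k \<and> k \<le> int K then v k else 0)) \<le> e"
proof -
  let ?f = "\<lambda>k. (norm (v k))\<^sup>2"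
  have sm: "?f summable_on UNIV" using assms(1) by (simp add: ell_def)
  obtain F where F: "finite F" "dist (sum ?f F) (infsum ?f UNIV) \<le> e\<^sup>2"
    using infsum_finite_approximation[OF sm, of "e\<^sup>2"] assms(2) by auto
  obtain K where K: "\<And>k. k \<in> F \<Longrightarrow> \<bar>k\<bar> \<le> int K" using finite_int_bound[OF F(1)] by blast
  define I where "I = {- int K..int K}"
  have FI: "F \<subseteq> I" using K by (force simp: I_def)
  have "nrm (\<lambda>k. v k - (if - int K \<le> k \<and> k \<le> int K then v k else 0)) \<le> e"
  proof (rule nrm_le[THEN conjunct2])
    fix G :: "int set" assume G: "finite G"
    have "(L2_set (\<lambda>k. norm (v k - (if - int K \<le> k \<and> k \<le> int K then v k else 0))) G)\<^sup>2
        = (\<Sum>k\<in>G. (norm (v k - (if - int K \<le> k \<and> k \<le> int K then v k else 0)))\<^sup>2)"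
      unfolding L2_set_def by (simp add: sum_nonneg)
    also have "\<dots> = (\<Sum>k\<in>G - I. ?f k)"
      using G by (intro sum.mono_neutral_cong_right) (auto simp: I_def)
    also have "\<dots> = sum ?f (G \<union> I) - sum ?f I"
    proof -
      have "sum ?f (G \<union> I) = sum ?f ((G - I) \<union> I)" by (simp add: Un_Diff_cancel2)
      also have "\<dots> = sum ?f (G - I) + sum ?f I"
        by (rule sum.union_disjoint) (use G in \<open>auto simp: I_def\<close>)
      finally show ?thesis by simp
    qed
    also have "\<dots> \<le> infsum ?f UNIV - sum ?f F"
    proof -
      have "sum ?f (G \<union> I) \<le> infsum ?f UNIV"
        using G sm by (intro finite_sum_le_infsum) (auto simp: I_def)
      moreover have "sum ?f F \<le> sum ?f I" using FI by (intro sum_mono2) (auto simp: I_def)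
      ultimately show ?thesis by linarith
    qed
    also have "\<dots> \<le> e\<^sup>2" using F(2) by (simp add: dist_real_def)
    finally show "L2_set (\<lambda>k. norm (v k - (if - int K \<le> k \<and> k \<le> int K then v k else 0))) G \<le> e"
      using assms(2) by (simp add: power2_le_iff_abs_le)
  qed
  then show ?thesis by (rule that)
qed

definition Tn :: "real \<Rightarrow> ('h::real_vector \<Rightarrow> 'h) \<Rightarrow> (int \<Rightarrow> 'h) \<Rightarrow> int \<Rightarrow> 'h" where
  "Tn r A v = (\<lambda>k. r *\<^sub>R v (k + 1) - A (v k))"

lemma window_inc:
  assumes "p \<in> {b..<b + int N}" "p' \<in> {b..<b + int N}" "int N dvd (p - p')"
  shows "p = p'"
proof -
  obtain c where c: "p - p' = int N * c" using assms(3) by blast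
  have lt: "\<bar>p - p'\<bar> < int N" using assms(1,2) by auto
  then have N: "int N > 0" by linarith
  have "int N * \<bar>c\<bar> < int N * 1" using lt c by (simp add: abs_mult)
  then have "\<bar>c\<bar> < 1" using N by (simp only: mult_less_cancel_left)
  then have "c = 0" by simp
  then show ?thesis using c by simp
qed

lemma cscale_zero:
  assumes "complex_structure J" shows "cscale J z 0 = 0"
proof -
  interpret J: bounded_linear J using cs_J_props(1)[OF assms] .
  show ?thesis by (simp add: cscale_def J.zero)
qed

lemma cscale_diff:
  assumes "complex_structure J" shows "cscale J z (x - y) = cscale J z x - cscale J z y"
proof -
  interpret J: bounded_linear J using cs_J_props(1)[OF assms] .
  show ?thesis by (simp add: cscale_def J.diff algebra_simps)
qed

locale LPset =
  fixes J :: "'h::{real_inner, complete_space} \<Rightarrow> 'h" and A :: "'h \<Rightarrow> 'h" and \<rho> :: real and M :: real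
  assumes J: "complex_structure J"
    and A: "bounded_clinear_op J A"
    and rho: "\<rho> > 0"
    and res: "\<And>z. z \<in> sphere 0 \<rho> \<Longrightarrow> \<exists>B. bounded_clinear_op J B \<and> B \<circ> shifted_op J A z = id
                                   \<and> shifted_op J A z \<circ> B = id"
    and Mb: "\<And>z. z \<in> sphere 0 \<rho> \<Longrightarrow> onorm (resolvent J A z) \<le> M"
begin

lemma A_bl: "bounded_linear A" using A by (simp add: bounded_clinear_op_def)

lemma res_props:
  assumes "z \<in> sphere 0 \<rho>"
  shows "bounded_clinear_op J (resolvent J A z)" "\<And>x. resolvent J A z (shifted_op J A z x) = x"
        "\<And>y. shifted_op J A z (resolvent J A z y) = y"
proof -
  obtain B where B: "bounded_clinear_op J B" "B \<circ> shifted_op J A z = id" "shifted_op J A z \<circ> B = id"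
    using res[OF assms] by blast
  have R: "resolvent J A z = B" unfolding resolvent_def by (rule inv_unique_comp) (use B in auto)
  show "bounded_clinear_op J (resolvent J A z)" "\<And>x. resolvent J A z (shifted_op J A z x) = x"
        "\<And>y. shifted_op J A z (resolvent J A z y) = y"
    unfolding R using B by (simp_all add: fun_eq_iff)
qed

lemma res_bound:
  assumes "z \<in> sphere 0 \<rho>"
  shows "norm (resolvent J A z y) \<le> M * norm y"
proof -
  have "bounded_linear (resolvent J A z)" using res_props(1)[OF assms] by (simp add: bounded_clinear_op_def)
  then have "norm (resolvent J A z y) \<le> onorm (resolvent J A z) * norm y" by (rule onorm)
  also have "\<dots> \<le> M * norm y" using Mb[OF assms] by (simp add: mult_right_mono)
  finally show ?thesis .
qed

lemma res_lb:
  assumes "z \<in> sphere 0 \<rho>"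
  shows "norm x \<le> M * norm (shifted_op J A z x)"
  using res_bound[OF assms, of "shifted_op J A z x"] res_props(2)[OF assms] by simp

lemma M_nonneg: "M \<ge> 0"
proof -
  have z: "complex_of_real \<rho> \<in> sphere 0 \<rho>" using rho by simp
  have "bounded_linear (resolvent J A (complex_of_real \<rho>))"
    using res_props(1)[OF z] by (simp add: bounded_clinear_op_def)
  then show ?thesis using Mb[OF z] onorm_pos_le by (meson order_trans)
qed

lemma zj_sphere: "complex_of_real \<rho> * ee N j \<in> sphere 0 \<rho>"
  using rho by (simp add: norm_mult)

lemma A_cscale: "A (cscale J z x) = cscale J z (A x)"
  by (rule clinear_cscale[OF J A])

lemma A_sum: "A (\<Sum>i\<in>S. f i) = (\<Sum>i\<in>S. A (f i))"
  using linear_sum[OF bounded_linear.linear[OF A_bl]] by simp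

lemma A_zero: "A 0 = 0"
proof -
  interpret bounded_linear A by (rule A_bl)
  show ?thesis by (rule zero)
qed

lemma lower_bound:
  assumes supp: "\<And>k. k \<notin> {a..<a + int n} \<Longrightarrow> v k = 0"
  shows "nrm v \<le> M * nrm (Tn \<rho> A v)"
proof -
  define N where "N = Suc n"
  have N0: "N > 0" by (simp add: N_def)
  define I where "I = {a - 1..<a - 1 + int N}"
  have suppI: "v k = 0" if "k \<notin> I" for k using supp that by (auto simp: I_def N_def)
  have suppT: "Tn \<rho> A v k = 0" if "k \<notin> I" for k
    using supp[of k] supp[of "k+1"] that by (auto simp: I_def N_def Tn_def A_zero)
  have fI: "finite I" by (simp add: I_def)
  have nv: "nrm v = L2_set (\<lambda>k. norm (v k)) I" by (rule ell_fin(2)[OF fI suppI])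
  have nT: "nrm (Tn \<rho> A v) = L2_set (\<lambda>k. norm (Tn \<rho> A v k)) I" by (rule ell_fin(2)[OF fI suppT])
  define V where "V j = (\<Sum>k\<in>I. cscale J (ee N (-1 * (j * k))) (v k))" for j
  define U where "U j = (\<Sum>k\<in>I. cscale J (ee N (-1 * (j * k))) (Tn \<rho> A v k))" for j
  define z where "z j = complex_of_real \<rho> * ee N j" for j
  have UV: "U j = shifted_op J A (z j) (V j)" for j
  proof -
    define S0 where "S0 = {a..<a + int n}"
    have V0: "V j = (\<Sum>m\<in>S0. cscale J (ee N (-1 * (j * m))) (v m))"
      unfolding V_def by (rule sum.mono_neutral_right) (auto simp: I_def S0_def N_def supp cscale_zero[OF J])
    have img: "(\<lambda>m. m - 1) ` S0 = {a - 1..<a + int n - 1}"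
    proof (rule set_eqI, rule iffI)
      fix k assume "k \<in> {a - 1..<a + int n - 1}"
      then show "k \<in> (\<lambda>m. m - 1) ` S0" by (intro image_eqI[of _ _ "k + 1"]) (auto simp: S0_def)
    qed (auto simp: S0_def)
    have "(\<Sum>k\<in>I. cscale J (ee N (-1 * (j * k))) (\<rho> *\<^sub>R v (k + 1)))
        = (\<Sum>k\<in>{a - 1..<a + int n - 1}. cscale J (ee N (-1 * (j * k))) (\<rho> *\<^sub>R v (k + 1)))"
      by (rule sum.mono_neutral_right) (auto simp: I_def S0_def N_def supp cscale_zero[OF J])
    also have "\<dots> = (\<Sum>k\<in>(\<lambda>m. m - 1) ` S0. cscale J (ee N (-1 * (j * k))) (\<rho> *\<^sub>R v (k + 1)))"
      by (simp only: img)
    also have "\<dots> = (\<Sum>m\<in>S0. cscale J (ee N (-1 * (j * (m - 1)))) (\<rho> *\<^sub>R v m))"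
      by (subst sum.reindex) (auto simp: inj_on_def)
    also have "\<dots> = (\<Sum>m\<in>S0. cscale J (z j) (cscale J (ee N (-1 * (j * m))) (v m)))"
    proof (rule sum.cong[OF refl])
      fix m
      have "ee N (-1 * (j * (m - 1))) = ee N j * ee N (-1 * (j * m))"
        by (simp add: ee_add[symmetric] algebra_simps)
      then have e: "z j * ee N (-1 * (j * m)) = complex_of_real \<rho> * ee N (-1 * (j * (m - 1)))"
        by (simp add: z_def mult.assoc)
      have r1: "cscale J (z j) (cscale J (ee N (-1 * (j * m))) (v m)) = cscale J (z j * ee N (-1 * (j * m))) (v m)"
        by (simp only: cscale_mult[OF J])
      have r2: "cscale J (ee N (-1 * (j * (m - 1)))) (\<rho> *\<^sub>R v m)
          = cscale J (complex_of_real \<rho> * ee N (-1 * (j * (m - 1)))) (v m)"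
        by (simp only: cscale_mult[OF J] cscale_of_real cscale_scaleR_right[OF J])
      show "cscale J (ee N (-1 * (j * (m - 1)))) (\<rho> *\<^sub>R v m) = cscale J (z j) (cscale J (ee N (-1 * (j * m))) (v m))"
        unfolding r1 r2 e ..
    qed
    also have "\<dots> = cscale J (z j) (V j)" by (simp add: V0 cscale_sum_right[OF J])
    finally have 1: "(\<Sum>k\<in>I. cscale J (ee N (-1 * (j * k))) (\<rho> *\<^sub>R v (k + 1))) = cscale J (z j) (V j)" .
    have 2: "(\<Sum>k\<in>I. cscale J (ee N (-1 * (j * k))) (A (v k))) = A (V j)"
      by (simp add: V_def A_sum A_cscale)
    have "U j = (\<Sum>k\<in>I. cscale J (ee N (-1 * (j * k))) (\<rho> *\<^sub>R v (k + 1)))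
               - (\<Sum>k\<in>I. cscale J (ee N (-1 * (j * k))) (A (v k)))"
      unfolding U_def Tn_def by (simp add: cscale_diff[OF J] sum_subtractf)
    then show ?thesis by (simp only: 1 2 shifted_op_def)
  qed
  have inc: "p = p'" if "p \<in> I" "p' \<in> I" "int N dvd (p - p')" for p p'
    using window_inc that unfolding I_def by blast
  have PV: "(\<Sum>j\<in>{0..<0 + int N}. (norm (V j))\<^sup>2) = real N * (\<Sum>k\<in>I. (norm (v k))\<^sup>2)"
    unfolding V_def by (rule parseval[OF J N0 fI inc]) auto
  have PU: "(\<Sum>j\<in>{0..<0 + int N}. (norm (U j))\<^sup>2) = real N * (\<Sum>k\<in>I. (norm (Tn \<rho> A v k))\<^sup>2)"
    unfolding U_def by (rule parseval[OF J N0 fI inc]) auto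
  have "(\<Sum>j\<in>{0..<0 + int N}. (norm (V j))\<^sup>2) \<le> (\<Sum>j\<in>{0..<0 + int N}. M\<^sup>2 * (norm (U j))\<^sup>2)"
  proof (rule sum_mono)
    fix j
    have "norm (V j) \<le> M * norm (U j)" unfolding UV z_def by (rule res_lb[OF zj_sphere])
    then have "(norm (V j))\<^sup>2 \<le> (M * norm (U j))\<^sup>2" by (simp add: power_mono)
    then show "(norm (V j))\<^sup>2 \<le> M\<^sup>2 * (norm (U j))\<^sup>2" by (simp add: power_mult_distrib)
  qed
  then have "real N * (\<Sum>k\<in>I. (norm (v k))\<^sup>2) \<le> real N * (M\<^sup>2 * (\<Sum>k\<in>I. (norm (Tn \<rho> A v k))\<^sup>2))"
    using PV PU by (simp add: sum_distrib_left[symmetric] mult_ac)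
  then have "(\<Sum>k\<in>I. (norm (v k))\<^sup>2) \<le> M\<^sup>2 * (\<Sum>k\<in>I. (norm (Tn \<rho> A v k))\<^sup>2)"
    using N0 by simp
  then have "sqrt (\<Sum>k\<in>I. (norm (v k))\<^sup>2) \<le> sqrt (M\<^sup>2 * (\<Sum>k\<in>I. (norm (Tn \<rho> A v k))\<^sup>2))"
    by (rule real_sqrt_le_mono)
  then show ?thesis using M_nonneg by (simp add: nv nT L2_set_def real_sqrt_mult)
qed

end

lemma clip_lip:
  fixes x y x' y' d :: real
  assumes "\<bar>x - x'\<bar> \<le> d" "\<bar>y - y'\<bar> \<le> d"
  shows "\<bar>max 0 (min 1 (min x y)) - max 0 (min 1 (min x' y'))\<bar> \<le> d"
  using assms by (simp add: max_def min_def abs_le_iff)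

context LPset begin

lemma A_scaleR: "A (c *\<^sub>R x) = c *\<^sub>R A x"
proof -
  interpret bounded_linear A by (rule A_bl)
  show ?thesis by (rule scaleR)
qed

lemma approx:
  assumes supp: "\<And>k. k \<notin> {a..<a + int n} \<Longrightarrow> u k = 0" and e: "e > 0"
  shows "\<exists>w. (\<exists>S. finite S \<and> (\<forall>k. k \<notin> S \<longrightarrow> w k = 0)) \<and> nrm (\<lambda>k. Tn \<rho> A w k - u k) \<le> e"
proof -
  obtain l :: nat where l: "\<rho> * M * nrm u / e < real l" using reals_Archimedean2 by blast
  define L where "L = Suc l"
  have L0: "real L > 0" by (simp add: L_def)
  have Lb: "\<rho> * M * nrm u \<le> e * real L"
    using l e by (simp add: L_def pos_divide_less_eq algebra_simps)
  define N where "N = n + 2 * L"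
  have N0: "N > 0" by (simp add: N_def L_def)
  define I where "I = {a - int L..<a - int L + int N}"
  have fI: "finite I" by (simp add: I_def)
  have suppI: "u k = 0" if "k \<notin> I" for k using supp that by (auto simp: I_def N_def)
  have nu: "nrm u = L2_set (\<lambda>k. norm (u k)) I" by (rule ell_fin(2)[OF fI suppI])
  define JJ where "JJ = {0..<0 + int N}"
  define U where "U j = (\<Sum>k\<in>I. cscale J (ee N (-1 * (j * k))) (u k))" for j
  define z where "z j = complex_of_real \<rho> * ee N j" for j
  define X where "X j = resolvent J A (z j) (U j)" for j
  define p where "p m = (1 / real N) *\<^sub>R (\<Sum>j\<in>JJ. cscale J (ee N (1 * (m * j))) (X j))" for m
  have zs: "z j \<in> sphere 0 \<rho>" for j unfolding z_def by (rule zj_sphere)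
  have Tp: "\<rho> *\<^sub>R p (m + 1) - A (p m) = u m" if mI: "m \<in> I" for m
  proof -
    have 1: "\<rho> *\<^sub>R p (m + 1) = (1 / real N) *\<^sub>R (\<Sum>j\<in>JJ. cscale J (ee N (1 * (m * j))) (cscale J (z j) (X j)))"
    proof -
      have pt: "\<rho> *\<^sub>R cscale J (ee N (1 * ((m + 1) * j))) (X j) = cscale J (ee N (1 * (m * j))) (cscale J (z j) (X j))" for j
      proof -
        have "complex_of_real \<rho> * ee N (1 * ((m + 1) * j)) = ee N (1 * (m * j)) * z j"
          by (simp add: z_def ee_add[symmetric] algebra_simps)
        then show ?thesis
          by (metis cscale_mult[OF J] cscale_of_real)
      qed
      have "\<rho> *\<^sub>R p (m + 1) = (1 / real N) *\<^sub>R (\<Sum>j\<in>JJ. \<rho> *\<^sub>R cscale J (ee N (1 * ((m + 1) * j))) (X j))"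
        unfolding p_def by (simp add: scaleR_sum_right)
      also have "\<dots> = (1 / real N) *\<^sub>R (\<Sum>j\<in>JJ. cscale J (ee N (1 * (m * j))) (cscale J (z j) (X j)))"
        by (simp only: pt)
      finally show ?thesis .
    qed
    have 2: "A (p m) = (1 / real N) *\<^sub>R (\<Sum>j\<in>JJ. cscale J (ee N (1 * (m * j))) (A (X j)))"
      unfolding p_def by (simp add: A_scaleR A_sum A_cscale)
    have "\<rho> *\<^sub>R p (m + 1) - A (p m) = (1 / real N) *\<^sub>R (\<Sum>j\<in>JJ. cscale J (ee N (1 * (m * j))) (shifted_op J A (z j) (X j)))"
      unfolding 1 2 shifted_op_def by (simp add: cscale_diff[OF J] sum_subtractf scaleR_diff_right)
    also have "\<dots> = (1 / real N) *\<^sub>R (\<Sum>j\<in>JJ. cscale J (ee N (1 * (m * j))) (U j))"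
      unfolding X_def using res_props(3)[OF zs] by simp
    also have "(\<Sum>j\<in>JJ. cscale J (ee N (1 * (m * j))) (U j)) = (\<Sum>j\<in>JJ. \<Sum>k\<in>I. cscale J (ee N (j * (m - k))) (u k))"
    proof (rule sum.cong[OF refl])
      fix j
      have "ee N (1 * (m * j)) * ee N (-1 * (j * k)) = ee N (j * (m - k))" for k
        by (simp add: ee_add[symmetric] algebra_simps)
      then show "cscale J (ee N (1 * (m * j))) (U j) = (\<Sum>k\<in>I. cscale J (ee N (j * (m - k))) (u k))"
        unfolding U_def by (simp add: cscale_sum_right[OF J] cscale_mult[OF J, symmetric])
    qed
    also have "\<dots> = (\<Sum>k\<in>I. cscale J (\<Sum>j\<in>JJ. ee N (j * (m - k))) (u k))"
      by (subst sum.swap) (simp add: cscale_sum_left)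
    also have "\<dots> = (\<Sum>k\<in>I. if k = m then real N *\<^sub>R u k else 0)"
    proof (rule sum.cong[OF refl])
      fix k assume kI: "k \<in> I"
      have "int N dvd (m - k) \<longleftrightarrow> k = m" using window_inc[of m _ N k] mI kI unfolding I_def by auto
      then show "cscale J (\<Sum>j\<in>JJ. ee N (j * (m - k))) (u k) = (if k = m then real N *\<^sub>R u k else 0)"
        unfolding JJ_def ee_orth[OF N0] by (auto simp: cscale_def)
    qed
    also have "\<dots> = real N *\<^sub>R u m" using mI fI by simp
    finally show ?thesis using N0 by simp
  qed
  have pb: "L2_set (\<lambda>m. norm (p m)) I \<le> M * nrm u"
  proof -
    have incJ: "j = j'" if "j \<in> JJ" "j' \<in> JJ" "int N dvd (j - j')" for j j'
      using window_inc that unfolding JJ_def by blast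
    have incI: "k = k'" if "k \<in> I" "k' \<in> I" "int N dvd (k - k')" for k k'
      using window_inc that unfolding I_def by blast
    have PX: "(\<Sum>m\<in>I. (norm (\<Sum>j\<in>JJ. cscale J (ee N (1 * (m * j))) (X j)))\<^sup>2) = real N * (\<Sum>j\<in>JJ. (norm (X j))\<^sup>2)"
      unfolding I_def by (rule parseval[OF J N0 _ incJ]) (auto simp: JJ_def)
    have PU: "(\<Sum>j\<in>JJ. (norm (U j))\<^sup>2) = real N * (\<Sum>k\<in>I. (norm (u k))\<^sup>2)"
      unfolding U_def JJ_def by (rule parseval[OF J N0 fI incI]) auto
    have XU: "(\<Sum>j\<in>JJ. (norm (X j))\<^sup>2) \<le> M\<^sup>2 * (\<Sum>j\<in>JJ. (norm (U j))\<^sup>2)"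
      unfolding sum_distrib_left
    proof (rule sum_mono)
      fix j
      have "norm (X j) \<le> M * norm (U j)" unfolding X_def by (rule res_bound[OF zs])
      then have "(norm (X j))\<^sup>2 \<le> (M * norm (U j))\<^sup>2" by (simp add: power_mono)
      then show "(norm (X j))\<^sup>2 \<le> M\<^sup>2 * (norm (U j))\<^sup>2" by (simp add: power_mult_distrib)
    qed
    have "(\<Sum>m\<in>I. (norm (p m))\<^sup>2) = (1 / real N)\<^sup>2 * (\<Sum>m\<in>I. (norm (\<Sum>j\<in>JJ. cscale J (ee N (1 * (m * j))) (X j)))\<^sup>2)"
      unfolding p_def by (simp add: sum_distrib_left power_divide)
    also have "\<dots> = (1 / real N) * (\<Sum>j\<in>JJ. (norm (X j))\<^sup>2)"
      unfolding PX using N0 by (simp add: power2_eq_square)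
    also have "\<dots> \<le> (1 / real N) * (M\<^sup>2 * (\<Sum>j\<in>JJ. (norm (U j))\<^sup>2))"
      using XU N0 by (simp add: divide_right_mono)
    also have "\<dots> = M\<^sup>2 * (\<Sum>k\<in>I. (norm (u k))\<^sup>2)"
      unfolding PU using N0 by simp
    finally have "sqrt (\<Sum>m\<in>I. (norm (p m))\<^sup>2) \<le> sqrt (M\<^sup>2 * (\<Sum>k\<in>I. (norm (u k))\<^sup>2))"
      by (rule real_sqrt_le_mono)
    then show ?thesis using M_nonneg by (simp add: nu L2_set_def real_sqrt_mult)
  qed
  define \<phi> where "\<phi> m = max 0 (min 1 (min (real_of_int (m - (a - int L)) / real L)
                         (real_of_int (a + int n - 1 + int L - m) / real L)))" for m
  have \<phi>1: "\<phi> m = 1" if "a \<le> m" "m < a + int n" for m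
  proof -
    have "real_of_int (m - (a - int L)) / real L \<ge> 1" "real_of_int (a + int n - 1 + int L - m) / real L \<ge> 1"
      using that L0 by (simp_all add: le_divide_eq)
    then show ?thesis by (simp add: \<phi>_def)
  qed
  have \<phi>0: "a - int L < m \<and> m < a + int n - 1 + int L" if "\<phi> m \<noteq> 0" for m
  proof (rule ccontr)
    assume "\<not> (a - int L < m \<and> m < a + int n - 1 + int L)"
    then have "real_of_int (m - (a - int L)) / real L \<le> 0 \<or> real_of_int (a + int n - 1 + int L - m) / real L \<le> 0"
      using L0 by (auto simp: divide_le_0_iff)
    then have "\<phi> m = 0" by (auto simp: \<phi>_def)
    then show False using that by simp
  qed
  have \<phi>lip: "\<bar>\<phi> (m + 1) - \<phi> m\<bar> \<le> 1 / real L" for m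
    unfolding \<phi>_def by (rule clip_lip) (use L0 in \<open>simp_all add: diff_divide_distrib[symmetric]\<close>)
  define w where "w m = \<phi> m *\<^sub>R p m" for m
  have wsupp: "\<forall>k. k \<notin> I \<longrightarrow> w k = 0"
  proof (intro allI impI)
    fix k assume "k \<notin> I"
    then have "\<phi> k = 0" using \<phi>0[of k] by (force simp: I_def N_def)
    then show "w k = 0" by (simp add: w_def)
  qed
  have err: "Tn \<rho> A w m - u m = (\<rho> * (\<phi> (m + 1) - \<phi> m)) *\<^sub>R p (m + 1)" for m
  proof -
    have Tw: "Tn \<rho> A w m = (\<rho> * \<phi> (m + 1)) *\<^sub>R p (m + 1) - \<phi> m *\<^sub>R A (p m)"
      by (simp add: Tn_def w_def A_scaleR)
    show ?thesis
    proof (cases "\<phi> m = 0")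
      case True
      then have "u m = 0" using \<phi>1[of m] supp[of m] by force
      then show ?thesis using True by (simp add: Tw)
    next
      case False
      then have "m \<in> I" using \<phi>0[of m] by (auto simp: I_def N_def)
      then have Am: "A (p m) = \<rho> *\<^sub>R p (m + 1) - u m" using Tp[of m] by (simp add: algebra_simps)
      show ?thesis
      proof (cases "a \<le> m \<and> m < a + int n")
        case True
        then show ?thesis using \<phi>1[of m] by (simp add: Tw Am algebra_simps)
      next
        case False
        then have "u m = 0" using supp by auto
        then show ?thesis by (simp add: Tw Am algebra_simps)
      qed
    qed
  qed
  define S' where "S' = {a - int L - 1..<a - int L - 1 + int N}"
  have errsupp: "Tn \<rho> A w m - u m = 0" if "m \<notin> S'" for m
  proof -
    have "\<phi> (m + 1) = 0" using \<phi>0[of "m+1"] that by (force simp: S'_def N_def)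
    moreover have "\<phi> m = 0" using \<phi>0[of m] that by (force simp: S'_def N_def)
    ultimately show ?thesis by (simp add: err)
  qed
  have fS': "finite S'" by (simp add: S'_def)
  have "nrm (\<lambda>k. Tn \<rho> A w k - u k) = L2_set (\<lambda>m. norm (Tn \<rho> A w m - u m)) S'"
    by (rule ell_fin(2)[OF fS' errsupp])
  also have "\<dots> \<le> L2_set (\<lambda>m. \<rho> / real L * norm (p (m + 1))) S'"
  proof (rule L2_set_mono)
    fix m
    have "norm (Tn \<rho> A w m - u m) = \<rho> * \<bar>\<phi> (m + 1) - \<phi> m\<bar> * norm (p (m + 1))"
      using rho by (simp add: err abs_mult)
    also have "\<dots> \<le> \<rho> * (1 / real L) * norm (p (m + 1))"
      using rho \<phi>lip[of m] by (intro mult_right_mono mult_left_mono) auto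
    finally show "norm (Tn \<rho> A w m - u m) \<le> \<rho> / real L * norm (p (m + 1))" by simp
  qed auto
  also have "\<dots> = \<rho> / real L * L2_set (\<lambda>m. norm (p (m + 1))) S'"
    using rho L0 by (intro L2_set_right_distrib[symmetric]) simp
  also have "L2_set (\<lambda>m. norm (p (m + 1))) S' = L2_set (\<lambda>m. norm (p m)) I"
    unfolding L2_set_def
    by (rule arg_cong[where f = sqrt], rule sum.reindex_bij_witness[of _ "\<lambda>m. m - 1" "\<lambda>m. m + 1"])
       (auto simp: S'_def I_def)
  also have "\<rho> / real L * L2_set (\<lambda>m. norm (p m)) I \<le> \<rho> / real L * (M * nrm u)"
    using pb rho L0 by (intro mult_left_mono) auto
  also have "\<dots> \<le> e" using Lb L0 by (simp add: pos_divide_le_eq mult_ac)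
  finally show ?thesis using wsupp fI by blast
qed

end

lemma grp_h1: "(a::'a::ab_group_add) - b = (a - c) + (c - b)" by simp
lemma grp_h2: "(x::'a::ab_group_add) = u + (x - u)" by simp

lemma fin_window:
  assumes "finite S" "\<And>k. k \<notin> S \<Longrightarrow> v k = 0"
  shows "\<exists>a n. \<forall>k. k \<notin> {a..<a + int n} \<longrightarrow> v k = 0"
proof -
  obtain B :: nat where B: "\<forall>k\<in>S. \<bar>k\<bar> \<le> int B" using finite_int_bound[OF assms(1)] by blast
  show ?thesis
  proof (intro exI allI impI)
    fix k assume "k \<notin> {- int B..<- int B + int (2 * B + 1)}"
    then have "k \<notin> S" using B by force
    then show "v k = 0" by (rule assms(2))
  qed
qed

lemma ell_chi:
  assumes "ell v" shows "ell (chi_nonneg v) \<and> nrm (chi_nonneg v) \<le> nrm v"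
proof (rule nrm_le)
  fix F :: "int set" assume F: "finite F"
  have "L2_set (\<lambda>k. norm (chi_nonneg v k)) F \<le> L2_set (\<lambda>k. norm (v k)) F"
    by (rule L2_set_mono) (auto simp: chi_nonneg_def)
  also have "\<dots> \<le> nrm v" by (rule L2_le_nrm[OF assms F])
  finally show "L2_set (\<lambda>k. norm (chi_nonneg v k)) F \<le> nrm v" .
qed

context LPset begin

lemma A_diff: "A (x - y) = A x - A y"
proof -
  interpret bounded_linear A by (rule A_bl)
  show ?thesis by (rule diff)
qed

lemma A_norm: "norm (A x) \<le> onorm A * norm x"
  by (rule onorm[OF A_bl])

lemma Tn_ell:
  assumes "ell v" shows "ell (Tn \<rho> A v)"
proof -
  have "ell (Tn \<rho> A v) \<and> nrm (Tn \<rho> A v) \<le> \<rho> * nrm v + onorm A * nrm v"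
  proof (rule nrm_le)
    fix F :: "int set" assume F: "finite F"
    have "L2_set (\<lambda>k. norm (Tn \<rho> A v k)) F \<le> L2_set (\<lambda>k. \<rho> * norm (v (k + 1)) + onorm A * norm (v k)) F"
    proof (rule L2_set_mono)
      fix k
      have "norm (Tn \<rho> A v k) \<le> norm (\<rho> *\<^sub>R v (k + 1)) + norm (A (v k))"
        unfolding Tn_def by (rule norm_triangle_ineq4)
      also have "\<dots> \<le> \<rho> * norm (v (k + 1)) + onorm A * norm (v k)"
        using rho A_norm[of "v k"] by simp
      finally show "norm (Tn \<rho> A v k) \<le> \<rho> * norm (v (k + 1)) + onorm A * norm (v k)" .
    qed simp
    also have "\<dots> \<le> L2_set (\<lambda>k. \<rho> * norm (v (k + 1))) F + L2_set (\<lambda>k. onorm A * norm (v k)) F"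
      by (rule L2_set_triangle_ineq)
    also have "\<dots> = \<rho> * L2_set (\<lambda>k. norm (v (k + 1))) F + onorm A * L2_set (\<lambda>k. norm (v k)) F"
      using rho onorm_pos_le[OF A_bl] by (simp add: L2_set_right_distrib)
    also have "L2_set (\<lambda>k. norm (v (k + 1))) F = L2_set (\<lambda>k. norm (v k)) ((\<lambda>k. k + 1) ` F)"
      unfolding L2_set_def by (subst sum.reindex) (auto simp: inj_on_def)
    also have "\<rho> * \<dots> + onorm A * L2_set (\<lambda>k. norm (v k)) F \<le> \<rho> * nrm v + onorm A * nrm v"
      using rho onorm_pos_le[OF A_bl] L2_le_nrm[OF assms F] L2_le_nrm[OF assms finite_imageI[OF F]]
      by (intro add_mono mult_left_mono) auto
    finally show "L2_set (\<lambda>k. norm (Tn \<rho> A v k)) F \<le> \<rho> * nrm v + onorm A * nrm v" .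
  qed
  then show ?thesis by simp
qed

lemma Tn_diff: "Tn \<rho> A (\<lambda>k. v k - w k) = (\<lambda>k. Tn \<rho> A v k - Tn \<rho> A w k)"
  by (simp add: Tn_def A_diff fun_eq_iff algebra_simps)

lemma lb_fin:
  assumes "finite S" "\<And>k. k \<notin> S \<Longrightarrow> v k = 0"
  shows "nrm v \<le> M * nrm (Tn \<rho> A v)"
proof -
  obtain a n where "\<forall>k. k \<notin> {a..<a + int n} \<longrightarrow> v k = 0" using fin_window[of S v, OF assms] by blast
  then show ?thesis by (intro lower_bound) blast
qed

lemma inj:
  assumes v: "ell v" and T0: "\<And>k. Tn \<rho> A v k = 0"
  shows "v k = 0"
proof -
  define B where "B = onorm A"
  have B0: "B \<ge> 0" unfolding B_def by (rule onorm_pos_le[OF A_bl])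
  define tr where "tr K = (\<lambda>k. if - int K \<le> k \<and> k \<le> int K then v k else 0)" for K :: nat
  define s where "s K = sqrt ((norm (v (int K)))\<^sup>2 + (norm (v (- int K)))\<^sup>2)" for K :: nat
  have s0: "s \<longlonglongrightarrow> 0" unfolding s_def using tendsto_real_sqrt[OF ell_tail[OF v]] by simp
  have bound: "norm (v k) \<le> M * (\<rho> + B) * s K" if K: "\<bar>k\<bar> \<le> int K" for K
  proof -
    define S where "S = {- int K - 1, int K}"
    have Tz: "Tn \<rho> A (tr K) j = 0" if "j \<notin> S" for j
    proof (cases "- int K \<le> j \<and> j < int K")
      case True
      then have "tr K j = v j" "tr K (j + 1) = v (j + 1)" by (auto simp: tr_def)
      then have "Tn \<rho> A (tr K) j = Tn \<rho> A v j" by (simp add: Tn_def)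
      then show ?thesis using T0[of j] by simp
    next
      case False
      then have "j < - int K - 1 \<or> j > int K" using that by (auto simp: S_def)
      then show ?thesis by (auto simp: Tn_def tr_def A_zero)
    qed
    have T1: "Tn \<rho> A (tr K) (- int K - 1) = \<rho> *\<^sub>R v (- int K)"
      by (simp add: Tn_def tr_def A_zero)
    have T2: "Tn \<rho> A (tr K) (int K) = - A (v (int K))"
      by (simp add: Tn_def tr_def)
    have fin_tr: "finite {- int K..int K}" by simp
    have tr0: "tr K j = 0" if "j \<notin> {- int K..int K}" for j using that by (auto simp: tr_def)
    have "norm (v k) = norm (tr K k)" using K by (auto simp: tr_def)
    also have "\<dots> \<le> nrm (tr K)" by (rule nrm_pt[OF ell_fin(1)[OF fin_tr tr0]])
    also have "\<dots> \<le> M * nrm (Tn \<rho> A (tr K))" by (rule lb_fin[OF fin_tr tr0])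
    finally have a1: "norm (v k) \<le> M * nrm (Tn \<rho> A (tr K))" .
    have "nrm (Tn \<rho> A (tr K)) = L2_set (\<lambda>j. norm (Tn \<rho> A (tr K) j)) S"
      by (rule ell_fin(2)) (use Tz in \<open>auto simp: S_def\<close>)
    also have "\<dots> = sqrt ((norm (\<rho> *\<^sub>R v (- int K)))\<^sup>2 + (norm (A (v (int K))))\<^sup>2)"
      unfolding S_def L2_set_def by (simp add: T1 T2)
    also have "\<dots> \<le> norm (\<rho> *\<^sub>R v (- int K)) + norm (A (v (int K)))"
      by (rule sqrt_sum_squares_le_sum_abs[THEN order_trans]) simp
    also have "\<dots> \<le> \<rho> * s K + B * s K"
    proof (rule add_mono)
      have "norm (v (- int K)) \<le> s K" unfolding s_def by (rule real_sqrt_sum_squares_ge2)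
      then show "norm (\<rho> *\<^sub>R v (- int K)) \<le> \<rho> * s K" using rho by simp
      have "norm (v (int K)) \<le> s K" unfolding s_def by (rule real_sqrt_sum_squares_ge1)
      then have "B * norm (v (int K)) \<le> B * s K" using B0 by (rule mult_left_mono)
      then show "norm (A (v (int K))) \<le> B * s K"
        using A_norm[of "v (int K)"] unfolding B_def by linarith
    qed
    finally have a2: "nrm (Tn \<rho> A (tr K)) \<le> (\<rho> + B) * s K" by (simp add: algebra_simps)
    have "M * nrm (Tn \<rho> A (tr K)) \<le> M * ((\<rho> + B) * s K)" using a2 M_nonneg by (rule mult_left_mono)
    then show ?thesis using a1 by (simp add: mult.assoc)
  qed
  have lim: "(\<lambda>K. M * (\<rho> + B) * s K) \<longlonglongrightarrow> 0" using tendsto_mult_right_zero[OF s0] by simp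
  have "norm (v k) \<le> 0"
    by (rule LIMSEQ_le_const[OF lim]) (use bound in \<open>auto intro!: exI[of _ "nat \<bar>k\<bar>"]\<close>)
  then show ?thesis by simp
qed

lemma surj:
  assumes u: "ell u"
  shows "\<exists>w. ell w \<and> Tn \<rho> A w = u \<and> nrm w \<le> M * nrm u"
proof -
  have ex: "\<exists>w. (\<exists>S. finite S \<and> (\<forall>k. k \<notin> S \<longrightarrow> w k = 0)) \<and>
              nrm (\<lambda>k. Tn \<rho> A w k - u k) \<le> inverse (real (Suc n))" for n
  proof -
    define e where "e = inverse (real (Suc n)) / 2"
    have e0: "e > 0" by (simp add: e_def)
    obtain K where K: "nrm (\<lambda>k. u k - (if - int K \<le> k \<and> k \<le> int K then u k else 0)) \<le> e"
      by (rule ell_trunc[OF u e0])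
    define u' where "u' = (\<lambda>k. if - int K \<le> k \<and> k \<le> int K then u k else 0)"
    have fu'1: "finite {- int K..int K}" by simp
    have fu'2: "u' k = 0" if "k \<notin> {- int K..int K}" for k using that by (auto simp: u'_def)
    obtain a m where am: "\<forall>k. k \<notin> {a..<a + int m} \<longrightarrow> u' k = 0"
      using fin_window[of "{- int K..int K}" u', OF fu'1 fu'2] by blast
    have "\<exists>w. (\<exists>S. finite S \<and> (\<forall>k. k \<notin> S \<longrightarrow> w k = 0)) \<and> nrm (\<lambda>k. Tn \<rho> A w k - u' k) \<le> e"
      by (rule approx[of a m u' e]) (use am e0 in auto)
    then obtain w S where w1: "finite S" and w2: "\<forall>k. k \<notin> S \<longrightarrow> w k = 0"
        and w3: "nrm (\<lambda>k. Tn \<rho> A w k - u' k) \<le> e"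
      by blast
    have ew: "ell w" by (rule ell_fin(1)[OF w1]) (use w2 in blast)
    have eu': "ell u'" by (rule ell_fin(1)[OF fu'1 fu'2])
    have eq: "(\<lambda>k. Tn \<rho> A w k - u k) = (\<lambda>k. (Tn \<rho> A w k - u' k) + (u' k - u k))"
      by (simp add: fun_eq_iff)
    have e1: "ell (\<lambda>k. Tn \<rho> A w k - u' k)" using ell_diff[OF Tn_ell[OF ew] eu'] by (rule conjunct1)
    have e2: "ell (\<lambda>k. u' k - u k)" using ell_diff[OF eu' u] by (rule conjunct1)
    have t: "nrm (\<lambda>k. (Tn \<rho> A w k - u' k) + (u' k - u k)) \<le> nrm (\<lambda>k. Tn \<rho> A w k - u' k) + nrm (\<lambda>k. u' k - u k)"
      using ell_add[OF e1 e2] by (rule conjunct2)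
    have c: "nrm (\<lambda>k. u' k - u k) = nrm (\<lambda>k. u k - u' k)" by (rule nrm_diff_commute)
    have K': "nrm (\<lambda>k. u k - u' k) \<le> e" using K unfolding u'_def .
    have "nrm (\<lambda>k. Tn \<rho> A w k - u k) \<le> e + e" unfolding eq using t w3 c K' by linarith
    also have "e + e = inverse (real (Suc n))" by (simp add: e_def)
    finally show ?thesis using w1 w2 by blast
  qed
  define W where "W n = (SOME w. (\<exists>S. finite S \<and> (\<forall>k. k \<notin> S \<longrightarrow> w k = 0)) \<and>
              nrm (\<lambda>k. Tn \<rho> A w k - u k) \<le> inverse (real (Suc n)))" for n
  have W0: "(\<exists>S. finite S \<and> (\<forall>k. k \<notin> S \<longrightarrow> W n k = 0)) \<and>
              nrm (\<lambda>k. Tn \<rho> A (W n) k - u k) \<le> inverse (real (Suc n))" for n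
    unfolding W_def by (rule someI_ex[OF ex])
  have W: "\<And>n. \<exists>S. finite S \<and> (\<forall>k. k \<notin> S \<longrightarrow> W n k = 0)"
      "\<And>n. nrm (\<lambda>k. Tn \<rho> A (W n) k - u k) \<le> inverse (real (Suc n))"
    using W0 by blast+
  have eW: "ell (W n)" for n
  proof -
    obtain S where S: "finite S" "\<forall>k. k \<notin> S \<longrightarrow> W n k = 0" using W(1)[of n] by blast
    show ?thesis by (rule ell_fin(1)[OF S(1)]) (use S(2) in blast)
  qed
  have eR: "ell (\<lambda>k. Tn \<rho> A (W n) k - u k)" for n using ell_diff[OF Tn_ell[OF eW] u] by (rule conjunct1)
  have cauchy: "nrm (\<lambda>k. W n k - W m k) \<le> M * (inverse (real (Suc n)) + inverse (real (Suc m)))" for n m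
  proof -
    obtain S1 S2 where S: "finite S1" "\<forall>k. k \<notin> S1 \<longrightarrow> W n k = 0" "finite S2" "\<forall>k. k \<notin> S2 \<longrightarrow> W m k = 0"
      using W(1)[of n] W(1)[of m] by blast
    have "nrm (\<lambda>k. W n k - W m k) \<le> M * nrm (Tn \<rho> A (\<lambda>k. W n k - W m k))"
      by (rule lb_fin[of "S1 \<union> S2"]) (use S in auto)
    also have "Tn \<rho> A (\<lambda>k. W n k - W m k) = (\<lambda>k. (Tn \<rho> A (W n) k - u k) - (Tn \<rho> A (W m) k - u k))"
      by (simp add: Tn_diff)
    also have "M * nrm \<dots> \<le> M * (inverse (real (Suc n)) + inverse (real (Suc m)))"
      using ell_diff[OF eR eR, of n m] W(2)[of n] W(2)[of m] M_nonneg
      by (intro mult_left_mono) auto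
    finally show ?thesis .
  qed
  have conv: "convergent (\<lambda>n. W n k)" for k
  proof (rule Cauchy_convergent, rule metric_CauchyI)
    fix e :: real assume e: "e > 0"
    obtain N :: nat where N: "2 * M / e < real N" using reals_Archimedean2 by blast
    have "\<forall>m\<ge>N. \<forall>n\<ge>N. dist (W m k) (W n k) < e"
    proof (intro allI impI)
      fix m n assume mn: "m \<ge> N" "n \<ge> N"
      have i1: "inverse (real (Suc m)) \<le> inverse (real (Suc N))" "inverse (real (Suc n)) \<le> inverse (real (Suc N))"
        using mn by (auto intro!: le_imp_inverse_le)
      have "dist (W m k) (W n k) = norm (W m k - W n k)" by (simp add: dist_norm)
      also have "\<dots> \<le> nrm (\<lambda>k. W m k - W n k)"
        by (rule nrm_pt[OF conjunct1[OF ell_diff[OF eW eW]]])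
      also have "\<dots> \<le> M * (inverse (real (Suc m)) + inverse (real (Suc n)))" by (rule cauchy)
      also have "\<dots> \<le> M * (2 * inverse (real (Suc N)))"
      proof (rule mult_left_mono)
        show "inverse (real (Suc m)) + inverse (real (Suc n)) \<le> 2 * inverse (real (Suc N))"
          using i1 by linarith
      qed (rule M_nonneg)
      also have "\<dots> < e"
      proof -
        have "2 * M < e * real N" using N e by (simp add: pos_divide_less_eq mult.commute)
        moreover have "e * real N \<le> e * real (Suc N)" using e by simp
        ultimately have "2 * M < e * real (Suc N)" by linarith
        then show ?thesis by (simp add: field_simps)
      qed
      finally show "dist (W m k) (W n k) < e" .
    qed
    then show "\<exists>N. \<forall>m\<ge>N. \<forall>n\<ge>N. dist (W m k) (W n k) < e" by blast
  qed
  define w where "w k = lim (\<lambda>n. W n k)" for k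
  have Wl: "(\<lambda>n. W n k) \<longlonglongrightarrow> w k" for k using conv[of k] by (simp add: w_def convergent_LIMSEQ_iff)
  have Tw: "Tn \<rho> A w = u"
  proof
    fix k
    have l1: "(\<lambda>n. Tn \<rho> A (W n) k) \<longlonglongrightarrow> Tn \<rho> A w k"
    proof -
      have a1: "(\<lambda>n. A (W n k)) \<longlonglongrightarrow> A (w k)" by (rule bounded_linear.tendsto[OF A_bl Wl])
      have a2: "(\<lambda>n. \<rho> *\<^sub>R W n (k + 1)) \<longlonglongrightarrow> \<rho> *\<^sub>R w (k + 1)"
        by (rule tendsto_scaleR[OF tendsto_const Wl])
      show ?thesis unfolding Tn_def by (rule tendsto_diff[OF a2 a1])
    qed
    have "(\<lambda>n. Tn \<rho> A (W n) k - u k) \<longlonglongrightarrow> 0"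
    proof (rule Lim_null_comparison[OF _ LIMSEQ_inverse_real_of_nat])
      show "\<forall>\<^sub>F n in sequentially. norm (Tn \<rho> A (W n) k - u k) \<le> inverse (real (Suc n))"
      proof (intro always_eventually allI)
        fix n
        show "norm (Tn \<rho> A (W n) k - u k) \<le> inverse (real (Suc n))"
          using nrm_pt[OF eR[of n], of k] W(2)[of n] by linarith
      qed
    qed
    then have "(\<lambda>n. (Tn \<rho> A (W n) k - u k) + u k) \<longlonglongrightarrow> 0 + u k" by (intro tendsto_intros)
    then have l2: "(\<lambda>n. Tn \<rho> A (W n) k) \<longlonglongrightarrow> u k" by simp
    show "Tn \<rho> A w k = u k" using LIMSEQ_unique[OF l1 l2] .
  qed
  have bnd: "ell w \<and> nrm w \<le> M * nrm u + e" if e: "e > 0" for e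
  proof -
    obtain n0 :: nat where n0: "M / e < real n0" using reals_Archimedean2 by blast
    show ?thesis
    proof (rule ell_fatou[OF eW Wl])
      fix n assume n: "n \<ge> n0"
      obtain S where S: "finite S" "\<forall>k. k \<notin> S \<longrightarrow> W n k = 0" using W(1)[of n] by blast
      have "nrm (W n) \<le> M * nrm (Tn \<rho> A (W n))" by (rule lb_fin[OF S(1)]) (use S in auto)
      also have "Tn \<rho> A (W n) = (\<lambda>k. u k + (Tn \<rho> A (W n) k - u k))"
        by (simp add: fun_eq_iff)
      also have "M * nrm \<dots> \<le> M * (nrm u + inverse (real (Suc n)))"
      proof (rule mult_left_mono)
        show "nrm (\<lambda>k. u k + (Tn \<rho> A (W n) k - u k)) \<le> nrm u + inverse (real (Suc n))"
          using conjunct2[OF ell_add[OF u eR[of n]]] W(2)[of n] by linarith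
      qed (rule M_nonneg)
      also have "\<dots> \<le> M * nrm u + e"
      proof -
        have "M < e * real n0" using n0 e by (simp add: pos_divide_less_eq mult.commute)
        also have "\<dots> \<le> e * real (Suc n)" using n e by simp
        finally have "M * inverse (real (Suc n)) \<le> e" by (simp add: field_simps)
        then show ?thesis by (simp add: distrib_left)
      qed
      finally show "nrm (W n) \<le> M * nrm u + e" .
    qed
  qed
  have "nrm w \<le> M * nrm u"
  proof (rule field_le_epsilon)
    fix e :: real assume "e > 0"
    then show "nrm w \<le> M * nrm u + e" using bnd[of e] by (rule_tac conjunct2) simp
  qed
  moreover have "ell w" using bnd[of 1] by simp
  ultimately show ?thesis using Tw by blast
qed

definition Gt :: "(int \<Rightarrow> 'h) \<Rightarrow> int \<Rightarrow> 'h" where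
  "Gt y = (SOME w. ell w \<and> Tn \<rho> A w = y \<and> nrm w \<le> M * nrm y)"

lemma Gt:
  assumes "ell y" shows "ell (Gt y)" "Tn \<rho> A (Gt y) = y" "nrm (Gt y) \<le> M * nrm y"
  using someI_ex[OF surj[OF assms]] unfolding Gt_def by blast+

lemma Gt_Tn:
  assumes "ell v" shows "Gt (Tn \<rho> A v) = v"
proof
  fix k
  have y: "ell (Tn \<rho> A v)" by (rule Tn_ell[OF assms])
  have "Gt (Tn \<rho> A v) k - v k = 0"
    by (rule inj[of "\<lambda>k. Gt (Tn \<rho> A v) k - v k"])
       (use ell_diff[OF Gt(1)[OF y] assms] Gt(2)[OF y] in \<open>auto simp: Tn_diff\<close>)
  then show "Gt (Tn \<rho> A v) k = v k" by simp
qed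

lemma Gt_diff:
  assumes "ell y1" "ell y2" shows "(\<lambda>k. Gt y1 k - Gt y2 k) = Gt (\<lambda>k. y1 k - y2 k)"
proof -
  have e12: "ell (\<lambda>k. y1 k - y2 k)" using ell_diff[OF assms] by blast
  have "Gt (Tn \<rho> A (\<lambda>k. Gt y1 k - Gt y2 k)) = (\<lambda>k. Gt y1 k - Gt y2 k)"
    by (rule Gt_Tn) (use ell_diff[OF Gt(1)[OF assms(1)] Gt(1)[OF assms(2)]] in blast)
  moreover have "Tn \<rho> A (\<lambda>k. Gt y1 k - Gt y2 k) = (\<lambda>k. y1 k - y2 k)"
    by (simp add: Tn_diff Gt(2)[OF assms(1)] Gt(2)[OF assms(2)])
  ultimately show ?thesis by simp
qed

end

lemma res_props0:
  assumes "\<exists>B. bounded_clinear_op J B \<and> B \<circ> shifted_op J A z = id \<and> shifted_op J A z \<circ> B = id"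
  shows "bounded_linear (resolvent J A z)" "\<And>x. resolvent J A z (shifted_op J A z x) = x"
        "\<And>y. shifted_op J A z (resolvent J A z y) = y"
proof -
  obtain B where B: "bounded_clinear_op J B" "B \<circ> shifted_op J A z = id" "shifted_op J A z \<circ> B = id"
    using assms by blast
  have R: "resolvent J A z = B" unfolding resolvent_def by (rule inv_unique_comp) (use B in auto)
  show "bounded_linear (resolvent J A z)" "\<And>x. resolvent J A z (shifted_op J A z x) = x"
        "\<And>y. shifted_op J A z (resolvent J A z y) = y"
    unfolding R using B by (simp_all add: fun_eq_iff bounded_clinear_op_def)
qed

lemma res_local:
  fixes J :: "'h::real_inner \<Rightarrow> 'h"
  assumes J: "complex_structure J"
    and r0: "\<exists>B. bounded_clinear_op J B \<and> B \<circ> shifted_op J A z0 = id \<and> shifted_op J A z0 \<circ> B = id"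
    and r1: "\<exists>B. bounded_clinear_op J B \<and> B \<circ> shifted_op J A z = id \<and> shifted_op J A z \<circ> B = id"
    and d: "cmod (z - z0) < 1 / (2 * (onorm (resolvent J A z0) + 1))"
  shows "onorm (resolvent J A z) \<le> 2 * (onorm (resolvent J A z0) + 1)"
proof -
  define c where "c = onorm (resolvent J A z0) + 1"
  have c0: "c > 0" using onorm_pos_le[OF res_props0(1)[OF r0]] by (simp add: c_def)
  have lb: "norm x \<le> 2 * c * norm (shifted_op J A z x)" for x
  proof -
    have "norm x = norm (resolvent J A z0 (shifted_op J A z0 x))" using res_props0(2)[OF r0] by simp
    also have "\<dots> \<le> onorm (resolvent J A z0) * norm (shifted_op J A z0 x)"
      by (rule onorm[OF res_props0(1)[OF r0]])
    also have "\<dots> \<le> c * norm (shifted_op J A z0 x)" by (simp add: c_def mult_right_mono)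
    finally have a1: "norm x \<le> c * norm (shifted_op J A z0 x)" .
    have "shifted_op J A z x = shifted_op J A z0 x + cscale J (z - z0) x"
      unfolding shifted_op_def using cscale_add_left[of J z0 "z - z0" x] by simp
    then have "norm (shifted_op J A z0 x) \<le> norm (shifted_op J A z x) + norm (cscale J (z - z0) x)"
      by (metis add_diff_cancel norm_triangle_ineq4 order_trans norm_minus_commute order_refl
                diff_add_cancel norm_triangle_ineq)
    also have "norm (cscale J (z - z0) x) = cmod (z - z0) * norm x" by (rule cscale_norm[OF J])
    also have "\<dots> \<le> (1 / (2 * c)) * norm x"
      by (rule mult_right_mono) (use d in \<open>simp_all add: c_def\<close>)
    finally have a2: "norm (shifted_op J A z0 x) \<le> norm (shifted_op J A z x) + norm x / (2 * c)" by simp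
    have "norm x \<le> c * norm (shifted_op J A z x) + norm x / 2"
      using a1 mult_left_mono[OF a2, of c] c0 by (simp add: distrib_left)
    then show ?thesis by simp
  qed
  show ?thesis
  proof (rule onorm_bound)
    show "0 \<le> 2 * (onorm (resolvent J A z0) + 1)" using c0 by (simp add: c_def)
    fix y
    show "norm (resolvent J A z y) \<le> 2 * (onorm (resolvent J A z0) + 1) * norm y"
      using lb[of "resolvent J A z y"] res_props0(3)[OF r1] by (simp add: c_def)
  qed
qed

lemma res_bdd:
  fixes J :: "'h::real_inner \<Rightarrow> 'h"
  assumes J: "complex_structure J"
    and res: "\<And>z. z \<in> sphere 0 \<rho> \<Longrightarrow> \<exists>B. bounded_clinear_op J B \<and> B \<circ> shifted_op J A z = id
                                   \<and> shifted_op J A z \<circ> B = id"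
  shows "bdd_above ((\<lambda>z. onorm (resolvent J A z)) ` sphere 0 \<rho>)"
proof -
  define K where "K z0 = onorm (resolvent J A z0)" for z0
  define r where "r z0 = 1 / (2 * (K z0 + 1))" for z0
  have K0: "K z0 \<ge> 0" if "z0 \<in> sphere 0 \<rho>" for z0
    unfolding K_def by (rule onorm_pos_le[OF res_props0(1)[OF res[OF that]]])
  have r0: "r z0 > 0" if "z0 \<in> sphere 0 \<rho>" for z0 using K0[OF that] by (simp add: r_def)
  obtain D where D: "D \<subseteq> sphere 0 \<rho>" "finite D" "sphere 0 \<rho> \<subseteq> (\<Union>d\<in>D. ball d (r d))"
  proof (rule compactE_image[OF compact_sphere, of "sphere 0 \<rho>" "\<lambda>z0. ball z0 (r z0)"])
    show "sphere 0 \<rho> \<subseteq> (\<Union>c\<in>sphere 0 \<rho>. ball c (r c))"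
      using r0 by force
  qed auto
  show ?thesis
  proof (rule bdd_aboveI2)
    fix z :: complex assume z: "z \<in> sphere 0 \<rho>"
    then obtain d where d: "d \<in> D" "z \<in> ball d (r d)" using D(3) by blast
    have dS: "d \<in> sphere 0 \<rho>" using D(1) d(1) by blast
    have "cmod (z - d) < r d" using d(2) by (simp add: dist_norm norm_minus_commute)
    then have "onorm (resolvent J A z) \<le> 2 * (K d + 1)"
      unfolding K_def r_def by (intro res_local[OF J res[OF dS] res[OF z]]) (simp add: K_def)
    also have "\<dots> \<le> (\<Sum>d'\<in>D. 2 * (K d' + 1))"
      using D(2) d(1) K0 D(1) by (intro member_le_sum) force+
    finally show "onorm (resolvent J A z) \<le> (\<Sum>d'\<in>D. 2 * (K d' + 1))" .
  qed
qed

definition Phi :: "real \<Rightarrow> (int \<Rightarrow> 'h::real_vector) \<Rightarrow> int \<Rightarrow> 'h" where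
  "Phi r u = (\<lambda>k. r powi (- k) *\<^sub>R u k)"

definition Psi :: "real \<Rightarrow> (int \<Rightarrow> 'h::real_vector) \<Rightarrow> int \<Rightarrow> 'h" where
  "Psi r v = (\<lambda>k. r powi k *\<^sub>R v k)"

lemma wt:
  fixes x :: "'h::real_normed_vector"
  assumes "r > 0"
  shows "(norm (r powi (- k) *\<^sub>R x))\<^sup>2 = (norm x)\<^sup>2 * r powi (-2 * k)"
proof -
  have a: "\<bar>r powi (- k)\<bar> = r powi (- k)" using assms by (simp add: power_int_abs)
  have b: "(r powi (- k))\<^sup>2 = r powi (-2 * k)" by (simp add: power_int_power' mult.commute)
  show ?thesis by (simp add: a b power_mult_distrib mult.commute)
qed

lemma l2rho_Phi:
  fixes u :: "int \<Rightarrow> 'h::real_normed_vector"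
  assumes "r > 0"
  shows "u \<in> l2rho r \<longleftrightarrow> ell (Phi r u)" "l2rho_norm r u = nrm (Phi r u)"
proof -
  have eq: "(\<lambda>k. (norm (Phi r u k))\<^sup>2) = (\<lambda>k. (norm (u k))\<^sup>2 * r powi (-2 * k))"
    by (simp only: Phi_def wt[OF assms])
  show "u \<in> l2rho r \<longleftrightarrow> ell (Phi r u)" "l2rho_norm r u = nrm (Phi r u)"
    unfolding l2rho_def l2rho_norm_def ell_def nrm_def eq by simp_all
qed

lemma Phi_Psi: "r > 0 \<Longrightarrow> Phi r (Psi r v) = v"
  by (simp add: Phi_def Psi_def fun_eq_iff power_int_add[symmetric])

lemma Psi_Phi: "r > 0 \<Longrightarrow> Psi r (Phi r v) = v"
  by (simp add: Phi_def Psi_def fun_eq_iff power_int_add[symmetric])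

lemma Phi_diff: "Phi r (\<lambda>k. a k - b k) = (\<lambda>k. Phi r a k - Phi r b k)"
  by (simp add: Phi_def scaleR_diff_right)

lemma Phi_add: "Phi r (\<lambda>k. a k + b k) = (\<lambda>k. Phi r a k + Phi r b k)"
  by (simp add: Phi_def scaleR_add_right)

lemma Phi_chi: "Phi r (chi_nonneg v) = chi_nonneg (Phi r v)"
  by (simp add: Phi_def chi_nonneg_def fun_eq_iff)

lemma chi_diff:
  fixes a b :: "int \<Rightarrow> 'h::ab_group_add"
  shows "chi_nonneg (\<lambda>k. a k - b k) = (\<lambda>k. chi_nonneg a k - chi_nonneg b k)"
  by (auto simp: chi_nonneg_def fun_eq_iff)

lemma ell_delta: "ell (Phi r (delta_m1 x))"
  by (rule ell_fin(1)[of "{-1}"]) (auto simp: Phi_def delta_m1_def)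

lemma Phi_tau:
  assumes "r > 0" "bounded_linear A"
  shows "Phi r (tau_minus_A A u) = Tn r A (Phi r u)"
proof
  fix k
  interpret bounded_linear A by fact
  have "r * r powi (- (k + 1)) = r powi (- k)"
    using assms(1) power_int_add_1'[of r "- (k + 1)"] by simp
  then show "Phi r (tau_minus_A A u) k = Tn r A (Phi r u) k"
    by (simp add: Phi_def Tn_def tau_minus_A_def scaleR_diff_right scaleR scaleR_scaleR)
qed

theorem theorem4p5:
  fixes J :: "'h::{real_inner, complete_space} \<Rightarrow> 'h"
    and A :: "'h \<Rightarrow> 'h"
    and \<rho> :: real
    and F :: "(int \<Rightarrow> 'h) \<Rightarrow> (int \<Rightarrow> 'h)"
    and Lip :: real
  assumes sep: "separable_space (euclidean :: 'h topology)"
    and J: "complex_structure J"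
    and A: "bounded_clinear_op J A"
    and rho: "\<rho> > 0"
    and spec: "spectrum J A \<inter> sphere 0 \<rho> = {}"
    and F_maps: "\<And>u. u \<in> l2rho \<rho> \<Longrightarrow> F u \<in> l2rho \<rho>"
    and F_lip: "\<And>u v. u \<in> l2rho \<rho> \<Longrightarrow> v \<in> l2rho \<rho> \<Longrightarrow>
                  l2rho_norm \<rho> (\<lambda>n. F u n - F v n) \<le> Lip * l2rho_norm \<rho> (\<lambda>n. u n - v n)"
    and Lip_small: "Lip < 1 / (SUP z\<in>sphere 0 \<rho>. onorm (resolvent J A z))"
  shows "\<exists>G. (\<forall>u \<in> l2rho \<rho>. G u \<in> l2rho \<rho> \<and> tau_minus_A A (G u) = u
                              \<and> G (tau_minus_A A u) = u)
           \<and> (\<forall>x u. u \<in> l2rho \<rho> \<longrightarrow>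
                 chi_nonneg (G (\<lambda>n. F u n + delta_m1 x n)) \<in> l2rho \<rho>)
           \<and> (\<forall>x. \<exists>c<1. \<forall>u \<in> l2rho \<rho>. \<forall>v \<in> l2rho \<rho>.
                 l2rho_norm \<rho> (\<lambda>n. chi_nonneg (G (\<lambda>m. F u m + delta_m1 x m)) n
                                  - chi_nonneg (G (\<lambda>m. F v m + delta_m1 x m)) n)
                   \<le> c * l2rho_norm \<rho> (\<lambda>n. u n - v n))"
proof -
  define M where "M = (SUP z\<in>sphere 0 \<rho>. onorm (resolvent J A z))"
  have res: "\<exists>B. bounded_clinear_op J B \<and> B \<circ> shifted_op J A z = id \<and> shifted_op J A z \<circ> B = id"
    if "z \<in> sphere 0 \<rho>" for z
    using spec that unfolding spectrum_def by blast
  have bdd: "bdd_above ((\<lambda>z. onorm (resolvent J A z)) ` sphere 0 \<rho>)"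
    by (rule res_bdd[OF J res])
  have Mb: "onorm (resolvent J A z) \<le> M" if "z \<in> sphere 0 \<rho>" for z
    unfolding M_def by (rule cSUP_upper[OF that bdd])
  interpret LPset J A \<rho> M
    by unfold_locales (use J A rho res Mb in auto)
  have A_bl': "bounded_linear A" by (rule A_bl)
  note l2 = l2rho_Phi[OF rho]
  note PP = Phi_Psi[OF rho] Psi_Phi[OF rho]
  define G where "G u = Psi \<rho> (Gt (Phi \<rho> u))" for u
  have PG: "Phi \<rho> (G u) = Gt (Phi \<rho> u)" for u by (simp add: G_def PP)
  have in_l2: "y \<in> l2rho \<rho> \<longleftrightarrow> ell (Phi \<rho> y)" for y :: "int \<Rightarrow> 'h" by (rule l2(1))
  have c1: "G u \<in> l2rho \<rho> \<and> tau_minus_A A (G u) = u \<and> G (tau_minus_A A u) = u" if u: "u \<in> l2rho \<rho>" for u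
  proof (intro conjI)
    have eu: "ell (Phi \<rho> u)" using u in_l2 by blast
    show "G u \<in> l2rho \<rho>" unfolding in_l2 PG by (rule Gt(1)[OF eu])
    have "Phi \<rho> (tau_minus_A A (G u)) = Phi \<rho> u"
      by (simp add: Phi_tau[OF rho A_bl'] PG Gt(2)[OF eu])
    then have "Psi \<rho> (Phi \<rho> (tau_minus_A A (G u))) = Psi \<rho> (Phi \<rho> u)" by simp
    then show "tau_minus_A A (G u) = u" by (simp add: PP)
    show "G (tau_minus_A A u) = u"
      by (simp add: G_def Phi_tau[OF rho A_bl'] Gt_Tn[OF eu] PP)
  qed
  have eF: "ell (Phi \<rho> (\<lambda>n. F u n + delta_m1 x n))" if u: "u \<in> l2rho \<rho>" for u x
  proof -
    have "ell (Phi \<rho> (F u))" using F_maps[OF u] in_l2 by blast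
    then show ?thesis unfolding Phi_add using ell_add ell_delta by blast
  qed
  have c2: "chi_nonneg (G (\<lambda>n. F u n + delta_m1 x n)) \<in> l2rho \<rho>" if u: "u \<in> l2rho \<rho>" for u x
    unfolding in_l2 Phi_chi PG using ell_chi[OF Gt(1)[OF eF[OF u]]] by blast
  have c3: "\<exists>c<1. \<forall>u \<in> l2rho \<rho>. \<forall>v \<in> l2rho \<rho>.
                 l2rho_norm \<rho> (\<lambda>n. chi_nonneg (G (\<lambda>m. F u m + delta_m1 x m)) n
                                  - chi_nonneg (G (\<lambda>m. F v m + delta_m1 x m)) n)
                   \<le> c * l2rho_norm \<rho> (\<lambda>n. u n - v n)" for x
  proof (intro exI[of _ "M * max Lip 0"] conjI ballI)
    show "M * max Lip 0 < 1"
    proof (cases "Lip > 0 \<and> M > 0")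
      case True
      then have "Lip < 1 / M" using Lip_small by (simp add: M_def)
      then show ?thesis using True by (simp add: field_simps)
    next
      case False
      then have "M = 0 \<or> max Lip 0 = 0" using M_nonneg by (auto simp: max_def)
      then show ?thesis by (metis mult_zero_left mult_zero_right zero_less_one)
    qed
    fix u v :: "int \<Rightarrow> 'h" assume u: "u \<in> l2rho \<rho>" and v: "v \<in> l2rho \<rho>"
    define a where "a = Phi \<rho> (\<lambda>n. F u n + delta_m1 x n)"
    define b where "b = Phi \<rho> (\<lambda>n. F v n + delta_m1 x n)"
    have ea: "ell a" unfolding a_def by (rule eF[OF u])
    have eb: "ell b" unfolding b_def by (rule eF[OF v])
    have ab: "(\<lambda>k. a k - b k) = Phi \<rho> (\<lambda>n. F u n - F v n)"
      by (simp add: a_def b_def Phi_def fun_eq_iff scaleR_diff_right scaleR_add_right)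
    have "l2rho_norm \<rho> (\<lambda>n. chi_nonneg (G (\<lambda>m. F u m + delta_m1 x m)) n
                                  - chi_nonneg (G (\<lambda>m. F v m + delta_m1 x m)) n)
        = nrm (chi_nonneg (\<lambda>k. Gt a k - Gt b k))"
      unfolding l2(2) Phi_diff Phi_chi PG chi_diff a_def b_def ..
    also have "\<dots> \<le> nrm (\<lambda>k. Gt a k - Gt b k)"
      using ell_chi ell_diff[OF Gt(1)[OF ea] Gt(1)[OF eb]] by blast
    also have "(\<lambda>k. Gt a k - Gt b k) = Gt (\<lambda>k. a k - b k)" by (rule Gt_diff[OF ea eb])
    also have "nrm \<dots> \<le> M * nrm (\<lambda>k. a k - b k)"
      by (rule Gt(3)) (use ell_diff[OF ea eb] in blast)
    also have "nrm (\<lambda>k. a k - b k) = l2rho_norm \<rho> (\<lambda>n. F u n - F v n)" unfolding ab l2(2) ..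
    also have "M * \<dots> \<le> M * (max Lip 0 * l2rho_norm \<rho> (\<lambda>n. u n - v n))"
    proof (rule mult_left_mono)
      have "0 \<le> l2rho_norm \<rho> (\<lambda>n. u n - v n)" by (simp add: l2(2) nrm_nonneg)
      then have "Lip * l2rho_norm \<rho> (\<lambda>n. u n - v n) \<le> max Lip 0 * l2rho_norm \<rho> (\<lambda>n. u n - v n)"
        by (intro mult_right_mono) auto
      then show "l2rho_norm \<rho> (\<lambda>n. F u n - F v n) \<le> max Lip 0 * l2rho_norm \<rho> (\<lambda>n. u n - v n)"
        using F_lip[OF u v] by linarith
    qed (rule M_nonneg)
    finally show "l2rho_norm \<rho> (\<lambda>n. chi_nonneg (G (\<lambda>m. F u m + delta_m1 x m)) n
                                  - chi_nonneg (G (\<lambda>m. F v m + delta_m1 x m)) n)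
                   \<le> M * max Lip 0 * l2rho_norm \<rho> (\<lambda>n. u n - v n)" by (simp add: mult.assoc)
  qed
  show ?thesis using c1 c2 c3 by (intro exI[of _ G]) blast
qed

end
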